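(* Let $\alpha\geqslant2$ and $\mathbb{D}\in\{\mathbb{R}^2,\mathbb{R}\times\mathbb{T}\}$. Let $N_1,N_2\in2^{\mathbb{Z}}$, $L_1,L_2\in2^{\mathbb{N}_0}$, $N_{\min}=\min(N_1,N_2)$, $N_{\max}=\max(N_1,N_2)$, $L_{\min}=\min(L_1,L_2)$, $L_{\max}=\max(L_1,L_2)$. Let $f_i=f_{i,N_i,L_i}:\mathbb{R}\times\mathbb{D}^*\to\mathbb{C}$, $i=1,2$, satisfy: $\pi_\xi(\mathrm{supp}f_j)\subseteq I_j$ for intervals $I_j$ with $|I_j|\lesssim N_{\min}$; $|\tau_i-\omega_\alpha(\xi_i,\eta_i)|\lesssim L_i$ for all $(\tau_i,\xi_i,\eta_i)\in\mathrm{supp}f_i$; and $$|\partial_\eta\omega_\alpha(\xi_1,\eta_1)-\partial_\eta\omega_\alpha(\xi-\xi_1,\eta-\eta_1)|\gtrsim N_{\max}^{\frac{\alpha}{2}}$$ whenever $(\xi_1,\eta_1)\in\pi_{\xi,\eta}(\mathrm{supp}f_1)$ and $(\xi-\xi_1,\eta-\eta_1)\in\pi_{\xi,\eta}(\mathrm{supp}f_2)$. Then $$\|f_1*f_2\|_{L^2_{\tau,\xi,\eta}}\lesssim N_{\min}^{\frac12}L_{\min}^{\frac12}C_{1,\mathbb{D}}(L_{\max},N_{\max})\prod_{i=1}^2\|f_i\|_{L^2_{\tau,\xi,\eta}}.$$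
   Context: $\mathbb{T}=\mathbb{R}/(2\pi\mathbb{Z})$; $\mathbb{D}^*=\mathbb{R}^2$ if $\mathbb{D}=\mathbb{R}^2$ and $\mathbb{D}^*=\mathbb{R}\times\mathbb{Z}$ (counting measure in $\eta$) if $\mathbb{D}=\mathbb{R}\times\mathbb{T}$; convolutions and $L^2$ norms are taken with respect to these measures. $\omega_\alpha(\xi,\eta)=\xi|\xi|^\alpha+\frac{\eta^2}{\xi}$, so $\partial_\eta\omega_\alpha=\frac{2\eta}{\xi}$. $\pi_\xi,\pi_{\xi,\eta}$ are the coordinate projections. $C_{1,\mathbb{R}^2}(L,N)=(L/N^{\alpha/2})^{1/2}$ and $C_{1,\mathbb{R}\times\mathbb{T}}(L,N)=\langle L/N^{\alpha/2}\rangle^{1/2}$, $\langle x\rangle=(1+x^2)^{1/2}$. *)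

theory Defs
  imports "HOL-Analysis.Analysis"
begin

definition omega_alpha :: "real \<Rightarrow> real \<Rightarrow> real \<Rightarrow> real" where
  "omega_alpha \<alpha> \<xi> \<eta> = \<xi> * \<bar>\<xi>\<bar> powr \<alpha> + \<eta>\<^sup>2 / \<xi>"

definition d_eta_omega :: "real \<Rightarrow> real \<Rightarrow> real" where
  "d_eta_omega \<xi> \<eta> = 2 * \<eta> / \<xi>"

definition dyadic_Z :: "real \<Rightarrow> bool" where
  "dyadic_Z N \<longleftrightarrow> (\<exists>k::int. N = 2 powr (real_of_int k))"

definition dyadic_N0 :: "real \<Rightarrow> bool" where
  "dyadic_N0 L \<longleftrightarrow> (\<exists>k::nat. L = 2 ^ k)"

definition supp :: "('a::topological_space \<Rightarrow> complex) \<Rightarrow> 'a set" where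
  "supp f = closure {x. f x \<noteq> 0}"

definition conv :: "('a::ab_group_add) measure \<Rightarrow> ('a \<Rightarrow> complex) \<Rightarrow> ('a \<Rightarrow> complex) \<Rightarrow> 'a \<Rightarrow> complex" where
  "conv M f g x = (\<integral>y. f y * g (x - y) \<partial>M)"

definition L2sq :: "'a measure \<Rightarrow> ('a \<Rightarrow> complex) \<Rightarrow> ennreal" where
  "L2sq M f = (\<integral>\<^sup>+ x. ennreal ((cmod (f x))\<^sup>2) \<partial>M)"

text \<open>Measures on R x D^*: D = R^2 gives R x R x R (Lebesgue), D = R x T gives R x R x Z
  (counting measure in eta).\<close>
definition M_R2 :: "(real \<times> real \<times> real) measure" where
  "M_R2 = lborel \<Otimes>\<^sub>M (lborel \<Otimes>\<^sub>M lborel)"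

definition M_RT :: "(real \<times> real \<times> int) measure" where
  "M_RT = lborel \<Otimes>\<^sub>M (lborel \<Otimes>\<^sub>M count_space UNIV)"

definition C1_R2 :: "real \<Rightarrow> real \<Rightarrow> real \<Rightarrow> real" where
  "C1_R2 \<alpha> L N = sqrt (L / N powr (\<alpha>/2))"

definition japanese :: "real \<Rightarrow> real" where
  "japanese x = sqrt (1 + x\<^sup>2)"

definition C1_RT :: "real \<Rightarrow> real \<Rightarrow> real \<Rightarrow> real" where
  "C1_RT \<alpha> L N = sqrt (japanese (L / N powr (\<alpha>/2)))"

end

theory Submission
  imports Defs
begin

lemma abstract_bound:
  fixes M :: "'a::ab_group_add measure" and f1 f2 :: "'a \<Rightarrow> complex" and K :: ennreal
  assumes sf: "sigma_finite_measure M"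
  and sp: "space M = UNIV"
  and minus: "(\<lambda>p. fst p - snd p) \<in> measurable (M \<Otimes>\<^sub>M M) M"
  and transl: "\<And>y h. h \<in> borel_measurable M \<Longrightarrow> (\<integral>\<^sup>+x. h (x - y) \<partial>M) = (\<integral>\<^sup>+x. h x \<partial>M)"
  and f1[measurable]: "f1 \<in> borel_measurable M" and f2[measurable]: "f2 \<in> borel_measurable M"
  and bound: "\<And>x. emeasure M {y. f1 y \<noteq> 0 \<and> f2 (x - y) \<noteq> 0} \<le> K"
  shows "L2sq M (conv M f1 f2) \<le> K * L2sq M f1 * L2sq M f2"
proof -
  interpret sigma_finite_measure M by fact
  interpret P: pair_sigma_finite M M by (intro pair_sigma_finite.intro sf)
  have mm[measurable]: "(\<lambda>p. fst p - snd p) \<in> measurable (M \<Otimes>\<^sub>M M) M" by (rule minus)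
  have F2[measurable]: "(\<lambda>p. f2 (fst p - snd p)) \<in> borel_measurable (M \<Otimes>\<^sub>M M)"
    by measurable
  have F2'[measurable]: "(\<lambda>y. f2 (x - y)) \<in> borel_measurable M" for x
  proof -
    have "(\<lambda>y. (x, y)) \<in> measurable M (M \<Otimes>\<^sub>M M)" using sp by (auto intro!: measurable_Pair)
    from measurable_comp[OF this F2] show ?thesis by (simp add: o_def)
  qed
  have F2''[measurable]: "(\<lambda>x. f2 (x - y)) \<in> borel_measurable M" for y
  proof -
    have "(\<lambda>x. (x, y)) \<in> measurable M (M \<Otimes>\<^sub>M M)" using sp by (auto intro!: measurable_Pair)
    from measurable_comp[OF this F2] show ?thesis by (simp add: o_def)
  qed
  have pt: "ennreal ((cmod (conv M f1 f2 x))\<^sup>2)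
      \<le> K * (\<integral>\<^sup>+y. ennreal ((cmod (f1 y))\<^sup>2) * ennreal ((cmod (f2 (x - y)))\<^sup>2) \<partial>M)" for x
  proof -
    define g where "g y = ennreal (cmod (f1 y) * cmod (f2 (x - y)))" for y
    define Z where "Z = {y. f1 y \<noteq> 0 \<and> f2 (x - y) \<noteq> 0}"
    have gm[measurable]: "g \<in> borel_measurable M" unfolding g_def by measurable
    have Zm[measurable]: "Z \<in> sets M"
    proof -
      have "{y \<in> space M. f1 y \<noteq> 0 \<and> f2 (x - y) \<noteq> 0} \<in> sets M" by measurable
      thus ?thesis using sp by (simp add: Z_def)
    qed
    have c1: "ennreal (cmod (conv M f1 f2 x)) \<le> (\<integral>\<^sup>+y. g y \<partial>M)"
    proof (cases "integrable M (\<lambda>y. f1 y * f2 (x - y))")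
      case True
      from integral_norm_bound_ennreal[OF True] show ?thesis
        by (simp add: conv_def g_def norm_mult)
    next
      case False
      then show ?thesis by (simp add: conv_def not_integrable_integral_eq)
    qed
    have c2: "(\<integral>\<^sup>+y. g y \<partial>M) = (\<integral>\<^sup>+y. g y * indicator Z y \<partial>M)"
      by (rule nn_integral_cong) (auto simp: g_def Z_def indicator_def)
    have c3: "(\<integral>\<^sup>+y. g y * indicator Z y \<partial>M)\<^sup>2 \<le> (\<integral>\<^sup>+y. g y ^ 2 \<partial>M) * (\<integral>\<^sup>+y. (indicator Z y :: ennreal) ^ 2 \<partial>M)"
      by (rule Cauchy_Schwarz_nn_integral) measurable
    have c4: "(\<integral>\<^sup>+y. (indicator Z y :: ennreal) ^ 2 \<partial>M) = emeasure M Z"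
    proof -
      have "(\<integral>\<^sup>+y. (indicator Z y :: ennreal) ^ 2 \<partial>M) = (\<integral>\<^sup>+y. indicator Z y \<partial>M)"
        by (rule nn_integral_cong) (simp add: indicator_def)
      thus ?thesis using Zm by simp
    qed
    have c5: "(\<integral>\<^sup>+y. g y ^ 2 \<partial>M) = (\<integral>\<^sup>+y. ennreal ((cmod (f1 y))\<^sup>2) * ennreal ((cmod (f2 (x - y)))\<^sup>2) \<partial>M)"
      by (rule nn_integral_cong) (simp add: g_def ennreal_mult'' power_mult_distrib ennreal_power)
    have "ennreal ((cmod (conv M f1 f2 x))\<^sup>2) = (ennreal (cmod (conv M f1 f2 x)))\<^sup>2"
      by (simp add: ennreal_power)
    also have "\<dots> \<le> (\<integral>\<^sup>+y. g y \<partial>M)\<^sup>2" using c1 by (intro power_mono) auto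
    also have "\<dots> \<le> (\<integral>\<^sup>+y. g y ^ 2 \<partial>M) * emeasure M Z" using c2 c3 c4 by simp
    also have "\<dots> \<le> (\<integral>\<^sup>+y. g y ^ 2 \<partial>M) * K" using bound[of x] unfolding Z_def by (intro mult_left_mono) auto
    finally show ?thesis using c5 by (simp add: mult.commute)
  qed
  have Hm: "(\<lambda>p. ennreal ((cmod (f1 (snd p)))\<^sup>2) * ennreal ((cmod (f2 (fst p - snd p)))\<^sup>2)) \<in> borel_measurable (M \<Otimes>\<^sub>M M)"
    by measurable
  have "L2sq M (conv M f1 f2) \<le> (\<integral>\<^sup>+x. K * (\<integral>\<^sup>+y. ennreal ((cmod (f1 y))\<^sup>2) * ennreal ((cmod (f2 (x - y)))\<^sup>2) \<partial>M) \<partial>M)"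
    unfolding L2sq_def by (rule nn_integral_mono) (rule pt)
  also have "\<dots> = K * (\<integral>\<^sup>+x. (\<integral>\<^sup>+y. ennreal ((cmod (f1 y))\<^sup>2) * ennreal ((cmod (f2 (x - y)))\<^sup>2) \<partial>M) \<partial>M)"
    using borel_measurable_nn_integral_fst[OF Hm] by (intro nn_integral_cmult) simp
  also have "(\<integral>\<^sup>+x. (\<integral>\<^sup>+y. ennreal ((cmod (f1 y))\<^sup>2) * ennreal ((cmod (f2 (x - y)))\<^sup>2) \<partial>M) \<partial>M)
     = (\<integral>\<^sup>+y. (\<integral>\<^sup>+x. ennreal ((cmod (f1 y))\<^sup>2) * ennreal ((cmod (f2 (x - y)))\<^sup>2) \<partial>M) \<partial>M)"
    using P.Fubini[OF Hm] by simp
  also have "\<dots> = (\<integral>\<^sup>+y. ennreal ((cmod (f1 y))\<^sup>2) * L2sq M f2 \<partial>M)"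
  proof (rule nn_integral_cong)
    fix y
    have "(\<integral>\<^sup>+x. ennreal ((cmod (f1 y))\<^sup>2) * ennreal ((cmod (f2 (x - y)))\<^sup>2) \<partial>M)
        = ennreal ((cmod (f1 y))\<^sup>2) * (\<integral>\<^sup>+x. ennreal ((cmod (f2 (x - y)))\<^sup>2) \<partial>M)"
      by (rule nn_integral_cmult) measurable
    also have "(\<integral>\<^sup>+x. ennreal ((cmod (f2 (x - y)))\<^sup>2) \<partial>M) = L2sq M f2"
      unfolding L2sq_def by (rule transl) measurable
    finally show "(\<integral>\<^sup>+x. ennreal ((cmod (f1 y))\<^sup>2) * ennreal ((cmod (f2 (x - y)))\<^sup>2) \<partial>M) = ennreal ((cmod (f1 y))\<^sup>2) * L2sq M f2" .
  qed
  also have "\<dots> = L2sq M f1 * L2sq M f2"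
    unfolding L2sq_def by (rule nn_integral_multc) measurable
  finally show ?thesis by (simp add: mult.assoc)
qed

lemma quad_id:
  fixes p q e s1 s2 :: real
  shows "(s2\<^sup>2/p + (e-s2)\<^sup>2/q) - (s1\<^sup>2/p + (e-s1)\<^sup>2/q)
    = (s2 - s1) * ((2 * s1/p - 2 * (e-s1)/q) + (2 * s2/p - 2 * (e-s2)/q)) / 2"
proof -
  have a: "x / y = x * inverse y" for x y :: real by (rule divide_inverse)
  have r: "(s2\<^sup>2 * ip + (e-s2)\<^sup>2 * iq) - (s1\<^sup>2 * ip + (e-s1)\<^sup>2 * iq) = (s2 - s1) * ((2 * s1 * ip - 2 * (e-s1) * iq) + (2 * s2 * ip - 2 * (e-s2) * iq)) / 2" for ip iq :: real
    by (simp add: power2_eq_square right_diff_distrib left_diff_distrib distrib_left distrib_right)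
  show ?thesis using r[of "inverse p" "inverse q"] by (simp only: a)
qed

lemma quad_close:
  fixes p q e s1 s2 t \<delta> c :: real
  assumes c: "c > 0" and h1: "\<bar>(s1\<^sup>2/p + (e-s1)\<^sup>2/q) - t\<bar> \<le> \<delta>" and h2: "\<bar>(s2\<^sup>2/p + (e-s2)\<^sup>2/q) - t\<bar> \<le> \<delta>"
    and sg: "((2 * s1/p - 2 * (e-s1)/q) \<ge> c \<and> (2 * s2/p - 2 * (e-s2)/q) \<ge> c) \<or> ((2 * s1/p - 2 * (e-s1)/q) \<le> -c \<and> (2 * s2/p - 2 * (e-s2)/q) \<le> -c)"
  shows "\<bar>s2 - s1\<bar> \<le> 2*\<delta>/c"
proof -
  define G where "G \<equiv> \<lambda>s::real. s\<^sup>2/p + (e-s)\<^sup>2/q"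
  define G' where "G' \<equiv> \<lambda>s::real. 2 * s/p - 2 * (e-s)/q"
  have id: "G s2 - G s1 = (s2 - s1) * (G' s1 + G' s2) / 2"
    unfolding G_def G'_def by (rule quad_id)
  have e2: "(s2 - s1) * (G' s1 + G' s2) = 2 * (G s2 - G s1)" using id by simp
  have "\<bar>G' s1 + G' s2\<bar> \<ge> 2*c" using sg unfolding G'_def by auto
  hence "\<bar>s2 - s1\<bar> * (2*c) \<le> \<bar>s2 - s1\<bar> * \<bar>G' s1 + G' s2\<bar>" by (intro mult_left_mono) auto
  also have "\<dots> = \<bar>(s2 - s1) * (G' s1 + G' s2)\<bar>" by (simp add: abs_mult)
  also have "\<dots> = 2 * \<bar>G s2 - G s1\<bar>" unfolding e2 by (simp only: abs_mult)
  also have "\<dots> \<le> 2 * (2*\<delta>)" using h1 h2 unfolding G_def by simp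
  finally have "\<bar>s2 - s1\<bar> * c \<le> 2*\<delta>" by (simp add: mult.commute)
  thus ?thesis using c by (simp add: field_simps)
qed

lemma omega_sum:
  "omega_alpha \<alpha> p s + omega_alpha \<alpha> q (e - s)
     = (p * \<bar>p\<bar> powr \<alpha> + q * \<bar>q\<bar> powr \<alpha>) + (s\<^sup>2/p + (e-s)\<^sup>2/q)"
  unfolding omega_alpha_def by simp

lemma quad_set:
  fixes c \<delta> :: real
  assumes c: "c > 0"
  shows "\<exists>u v. {s::real. \<bar>\<tau>' - omega_alpha \<alpha> p s - omega_alpha \<alpha> q (e - s)\<bar> \<le> \<delta>
        \<and> \<bar>d_eta_omega p s - d_eta_omega q (e - s)\<bar> \<ge> c} \<subseteq> cball u (2*\<delta>/c) \<union> cball v (2*\<delta>/c)"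
proof -
  define G where "G \<equiv> \<lambda>s::real. s\<^sup>2/p + (e-s)\<^sup>2/q"
  define G' where "G' \<equiv> \<lambda>s::real. 2 * s/p - 2*(e-s)/q"
  define t where "t = \<tau>' - (p * \<bar>p\<bar> powr \<alpha> + q * \<bar>q\<bar> powr \<alpha>)"
  define X where "X = {s::real. \<bar>\<tau>' - omega_alpha \<alpha> p s - omega_alpha \<alpha> q (e - s)\<bar> \<le> \<delta>
        \<and> \<bar>d_eta_omega p s - d_eta_omega q (e - s)\<bar> \<ge> c}"
  have Xc: "X = {s. \<bar>G s - t\<bar> \<le> \<delta> \<and> \<bar>G' s\<bar> \<ge> c}"
  proof -
    have "\<tau>' - omega_alpha \<alpha> p s - omega_alpha \<alpha> q (e - s) = -(G s - t)" for s
      using omega_sum[of \<alpha> p s q e] unfolding G_def t_def by simp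
    moreover have "d_eta_omega p s - d_eta_omega q (e - s) = G' s" for s
      unfolding G'_def d_eta_omega_def by simp
    ultimately show ?thesis unfolding X_def by (simp only: abs_minus_cancel)
  qed
  define Xp where "Xp = {s \<in> X. G' s \<ge> c}"
  define Xm where "Xm = {s \<in> X. G' s \<le> -c}"
  have XU: "X = Xp \<union> Xm" unfolding Xp_def Xm_def Xc by auto
  obtain u where u: "Xp \<subseteq> cball u (2*\<delta>/c)"
  proof (cases "Xp = {}")
    case True then show ?thesis using that by blast
  next
    case False
    then obtain u where uX: "u \<in> Xp" by blast
    have "Xp \<subseteq> cball u (2*\<delta>/c)"
    proof
      fix s assume "s \<in> Xp"
      hence "\<bar>s - u\<bar> \<le> 2*\<delta>/c" using uX c unfolding Xp_def Xc
        by (intro quad_close[of c u p e q t \<delta> s]) (auto simp: G_def G'_def)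
      thus "s \<in> cball u (2*\<delta>/c)" by (simp add: dist_real_def abs_minus_commute)
    qed
    thus ?thesis using that by blast
  qed
  obtain v where v: "Xm \<subseteq> cball v (2*\<delta>/c)"
  proof (cases "Xm = {}")
    case True then show ?thesis using that by blast
  next
    case False
    then obtain u where uX: "u \<in> Xm" by blast
    have "Xm \<subseteq> cball u (2*\<delta>/c)"
    proof
      fix s assume "s \<in> Xm"
      hence "\<bar>s - u\<bar> \<le> 2*\<delta>/c" using uX c unfolding Xm_def Xc
        by (intro quad_close[of c u p e q t \<delta> s]) (auto simp: G_def G'_def)
      thus "s \<in> cball u (2*\<delta>/c)" by (simp add: dist_real_def abs_minus_commute)
    qed
    thus ?thesis using that by blast
  qed
  show ?thesis using u v XU unfolding X_def by blast
qed

lemma omega_meas[measurable]: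
  fixes f g :: "'a \<Rightarrow> real"
  assumes [measurable]: "f \<in> borel_measurable M" "g \<in> borel_measurable M"
  shows "(\<lambda>x. omega_alpha \<alpha> (f x) (g x)) \<in> borel_measurable M"
  unfolding omega_alpha_def by measurable

lemma deta_meas[measurable]:
  fixes f g :: "'a \<Rightarrow> real"
  assumes [measurable]: "f \<in> borel_measurable M" "g \<in> borel_measurable M"
  shows "(\<lambda>x. d_eta_omega (f x) (g x)) \<in> borel_measurable M"
  unfolding d_eta_omega_def by measurable

lemma geo:
  fixes N :: "'b::ab_group_add measure" and \<iota> :: "'b \<Rightarrow> real"
  assumes sfN: "sigma_finite_measure N" and spN: "space N = UNIV"
   and im[measurable]: "\<iota> \<in> borel_measurable N"
   and iadd: "\<And>a b. \<iota> (a - b) = \<iota> a - \<iota> b"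
   and W: "\<And>u D. D \<ge> 0 \<Longrightarrow> emeasure N (\<iota> -` cball u D) \<le> ennreal (W D)"
   and c: "c > 0" and l1: "l1 \<ge> 0" and l2: "l2 \<ge> 0"
  shows "emeasure (lborel \<Otimes>\<^sub>M (lborel \<Otimes>\<^sub>M N))
     {(\<tau>1, \<xi>1, \<eta>1). a \<le> \<xi>1 \<and> \<xi>1 \<le> b \<and> \<bar>\<tau>1 - omega_alpha \<alpha> \<xi>1 (\<iota> \<eta>1)\<bar> \<le> l1
        \<and> \<bar>(\<tau> - \<tau>1) - omega_alpha \<alpha> (\<xi> - \<xi>1) (\<iota> (\<eta> - \<eta>1))\<bar> \<le> l2
        \<and> \<bar>d_eta_omega \<xi>1 (\<iota> \<eta>1) - d_eta_omega (\<xi> - \<xi>1) (\<iota> (\<eta> - \<eta>1))\<bar> \<ge> c}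
   \<le> ennreal (2 * min l1 l2) * ennreal (b - a) * (2 * ennreal (W (2 * (l1 + l2) / c)))
   \<and> {(\<tau>1, \<xi>1, \<eta>1). a \<le> \<xi>1 \<and> \<xi>1 \<le> b \<and> \<bar>\<tau>1 - omega_alpha \<alpha> \<xi>1 (\<iota> \<eta>1)\<bar> \<le> l1
        \<and> \<bar>(\<tau> - \<tau>1) - omega_alpha \<alpha> (\<xi> - \<xi>1) (\<iota> (\<eta> - \<eta>1))\<bar> \<le> l2
        \<and> \<bar>d_eta_omega \<xi>1 (\<iota> \<eta>1) - d_eta_omega (\<xi> - \<xi>1) (\<iota> (\<eta> - \<eta>1))\<bar> \<ge> c} \<in> sets (lborel \<Otimes>\<^sub>M (lborel \<Otimes>\<^sub>M N))"
  (is "emeasure ?M ?B \<le> _ \<and> _")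
proof -
  interpret N: sigma_finite_measure N by fact
  interpret P2: pair_sigma_finite lborel N by (intro pair_sigma_finite.intro lborel.sigma_finite_measure_axioms sfN)
  interpret P: pair_sigma_finite lborel "lborel \<Otimes>\<^sub>M N"
    by (intro pair_sigma_finite.intro lborel.sigma_finite_measure_axioms P2.sigma_finite_measure_axioms)
  define D where "D = 2 * (l1 + l2) / c"
  have D0: "D \<ge> 0" using c l1 l2 by (simp add: D_def)
  define GG where "GG = {(\<xi>1, \<eta>1). a \<le> \<xi>1 \<and> \<xi>1 \<le> b
        \<and> \<bar>(\<tau> - omega_alpha \<alpha> \<xi>1 (\<iota> \<eta>1)) - omega_alpha \<alpha> (\<xi> - \<xi>1) (\<iota> \<eta> - \<iota> \<eta>1)\<bar> \<le> l1 + l2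
        \<and> \<bar>d_eta_omega \<xi>1 (\<iota> \<eta>1) - d_eta_omega (\<xi> - \<xi>1) (\<iota> \<eta> - \<iota> \<eta>1)\<bar> \<ge> c}"
  have B': "?B = {(\<tau>1, \<xi>1, \<eta>1). a \<le> \<xi>1 \<and> \<xi>1 \<le> b \<and> \<bar>\<tau>1 - omega_alpha \<alpha> \<xi>1 (\<iota> \<eta>1)\<bar> \<le> l1
        \<and> \<bar>(\<tau> - \<tau>1) - omega_alpha \<alpha> (\<xi> - \<xi>1) (\<iota> \<eta> - \<iota> \<eta>1)\<bar> \<le> l2
        \<and> \<bar>d_eta_omega \<xi>1 (\<iota> \<eta>1) - d_eta_omega (\<xi> - \<xi>1) (\<iota> \<eta> - \<iota> \<eta>1)\<bar> \<ge> c}"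
    by (simp add: iadd)
  have Bm: "?B \<in> sets ?M"
  proof -
    have "{p \<in> space ?M. (case p of (\<tau>1, \<xi>1, \<eta>1) \<Rightarrow> a \<le> \<xi>1 \<and> \<xi>1 \<le> b \<and> \<bar>\<tau>1 - omega_alpha \<alpha> \<xi>1 (\<iota> \<eta>1)\<bar> \<le> l1
        \<and> \<bar>(\<tau> - \<tau>1) - omega_alpha \<alpha> (\<xi> - \<xi>1) (\<iota> \<eta> - \<iota> \<eta>1)\<bar> \<le> l2
        \<and> \<bar>d_eta_omega \<xi>1 (\<iota> \<eta>1) - d_eta_omega (\<xi> - \<xi>1) (\<iota> \<eta> - \<iota> \<eta>1)\<bar> \<ge> c)} \<in> sets ?M"
      by measurable
    thus ?thesis unfolding B' by (simp add: space_pair_measure spN)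
  qed
  have GGm[measurable]: "GG \<in> sets (lborel \<Otimes>\<^sub>M N)"
  proof -
    have "{p \<in> space (lborel \<Otimes>\<^sub>M N). (case p of (\<xi>1, \<eta>1) \<Rightarrow> a \<le> \<xi>1 \<and> \<xi>1 \<le> b
        \<and> \<bar>(\<tau> - omega_alpha \<alpha> \<xi>1 (\<iota> \<eta>1)) - omega_alpha \<alpha> (\<xi> - \<xi>1) (\<iota> \<eta> - \<iota> \<eta>1)\<bar> \<le> l1 + l2
        \<and> \<bar>d_eta_omega \<xi>1 (\<iota> \<eta>1) - d_eta_omega (\<xi> - \<xi>1) (\<iota> \<eta> - \<iota> \<eta>1)\<bar> \<ge> c)} \<in> sets (lborel \<Otimes>\<^sub>M N)"
      by measurable
    thus ?thesis unfolding GG_def by (simp add: space_pair_measure spN)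
  qed
  have slice: "emeasure lborel ((\<lambda>x. (x, y)) -` ?B) \<le> ennreal (2 * min l1 l2) * indicator GG y" for y
  proof (cases y)
    case (Pair \<xi>1 \<eta>1)
    define w1 where "w1 = omega_alpha \<alpha> \<xi>1 (\<iota> \<eta>1)"
    define w2 where "w2 = omega_alpha \<alpha> (\<xi> - \<xi>1) (\<iota> \<eta> - \<iota> \<eta>1)"
    have S: "(\<lambda>x. (x, y)) -` ?B = {\<tau>1. a \<le> \<xi>1 \<and> \<xi>1 \<le> b \<and> \<bar>\<tau>1 - w1\<bar> \<le> l1 \<and> \<bar>(\<tau> - \<tau>1) - w2\<bar> \<le> l2
        \<and> \<bar>d_eta_omega \<xi>1 (\<iota> \<eta>1) - d_eta_omega (\<xi> - \<xi>1) (\<iota> \<eta> - \<iota> \<eta>1)\<bar> \<ge> c}"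
      unfolding B' Pair w1_def w2_def by auto
    show ?thesis
    proof (cases "y \<in> GG")
      case False
      have "(\<lambda>x. (x, y)) -` ?B = {}"
      proof (rule ccontr)
        assume "(\<lambda>x. (x, y)) -` ?B \<noteq> {}"
        then obtain t where "t \<in> (\<lambda>x. (x, y)) -` ?B" by blast
        hence tS: "t \<in> {\<tau>1. a \<le> \<xi>1 \<and> \<xi>1 \<le> b \<and> \<bar>\<tau>1 - w1\<bar> \<le> l1 \<and> \<bar>(\<tau> - \<tau>1) - w2\<bar> \<le> l2
        \<and> \<bar>d_eta_omega \<xi>1 (\<iota> \<eta>1) - d_eta_omega (\<xi> - \<xi>1) (\<iota> \<eta> - \<iota> \<eta>1)\<bar> \<ge> c}" unfolding S .
        hence "\<bar>t - w1\<bar> \<le> l1" "\<bar>(\<tau> - t) - w2\<bar> \<le> l2" by auto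
        hence "\<bar>(\<tau> - w1) - w2\<bar> \<le> l1 + l2" by linarith
        hence "y \<in> GG" using tS unfolding GG_def Pair w1_def w2_def by simp
        thus False using False by blast
      qed
      thus ?thesis by simp
    next
      case True
      have s1: "(\<lambda>x. (x, y)) -` ?B \<subseteq> {w1 - l1 .. w1 + l1}" unfolding S by auto
      have s2: "(\<lambda>x. (x, y)) -` ?B \<subseteq> {\<tau> - w2 - l2 .. \<tau> - w2 + l2}" unfolding S by auto
      have "emeasure lborel ((\<lambda>x. (x, y)) -` ?B) \<le> ennreal (2 * min l1 l2)"
      proof (cases "l1 \<le> l2")
        case True
        have "emeasure lborel ((\<lambda>x. (x, y)) -` ?B) \<le> emeasure lborel {w1 - l1 .. w1 + l1}"
          using s1 by (intro emeasure_mono) auto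
        thus ?thesis using True l1 by simp
      next
        case False
        have "emeasure lborel ((\<lambda>x. (x, y)) -` ?B) \<le> emeasure lborel {\<tau> - w2 - l2 .. \<tau> - w2 + l2}"
          using s2 by (intro emeasure_mono) auto
        thus ?thesis using False l2 by simp
      qed
      thus ?thesis using True by simp
    qed
  qed
  have inner: "(\<integral>\<^sup>+\<eta>1. indicator GG (\<xi>1, \<eta>1) \<partial>N) \<le> indicator {a..b} \<xi>1 * (2 * ennreal (W D))" for \<xi>1
  proof (cases "a \<le> \<xi>1 \<and> \<xi>1 \<le> b")
    case False
    hence "(\<integral>\<^sup>+\<eta>1. indicator GG (\<xi>1, \<eta>1) \<partial>N) = 0" by (auto simp: GG_def indicator_def)
    thus ?thesis by simp
  next
    case True
    obtain u v where uv: "{s::real. \<bar>\<tau> - omega_alpha \<alpha> \<xi>1 s - omega_alpha \<alpha> (\<xi> - \<xi>1) (\<iota> \<eta> - s)\<bar> \<le> l1 + l2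
        \<and> \<bar>d_eta_omega \<xi>1 s - d_eta_omega (\<xi> - \<xi>1) (\<iota> \<eta> - s)\<bar> \<ge> c} \<subseteq> cball u D \<union> cball v D"
      using quad_set[OF c, of \<tau> \<alpha> \<xi>1 "\<xi> - \<xi>1" "\<iota> \<eta>" "l1 + l2"] unfolding D_def by blast
    have le: "indicator GG (\<xi>1, \<eta>1) \<le> indicator (\<iota> -` cball u D) \<eta>1 + (indicator (\<iota> -` cball v D) \<eta>1 :: ennreal)" for \<eta>1
    proof (cases "(\<xi>1, \<eta>1) \<in> GG")
      case True
      hence "\<iota> \<eta>1 \<in> cball u D \<union> cball v D" using uv unfolding GG_def by auto
      thus ?thesis using True by (auto simp: indicator_def)
    qed auto
    have "(\<integral>\<^sup>+\<eta>1. indicator GG (\<xi>1, \<eta>1) \<partial>N)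
       \<le> (\<integral>\<^sup>+\<eta>1. indicator (\<iota> -` cball u D) \<eta>1 + (indicator (\<iota> -` cball v D) \<eta>1 :: ennreal) \<partial>N)"
      by (intro nn_integral_mono le)
    also have "\<dots> = emeasure N (\<iota> -` cball u D) + emeasure N (\<iota> -` cball v D)"
    proof -
      have m1: "\<iota> -` cball u D \<in> sets N"
      proof -
        have "\<iota> -` cball u D \<inter> space N \<in> sets N" by (rule measurable_sets[OF im]) auto
        thus ?thesis using spN by simp
      qed
      have m2: "\<iota> -` cball v D \<in> sets N"
      proof -
        have "\<iota> -` cball v D \<inter> space N \<in> sets N" by (rule measurable_sets[OF im]) auto
        thus ?thesis using spN by simp
      qed
      show ?thesis using m1 m2 by (subst nn_integral_add) auto
    qed
    also have "\<dots> \<le> ennreal (W D) + ennreal (W D)" using W[OF D0] by (intro add_mono)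
    also have "\<dots> = indicator {a..b} \<xi>1 * (2 * ennreal (W D))" using True by (simp add: mult_2)
    finally show ?thesis .
  qed
  have "emeasure ?M ?B \<le> ennreal (2 * min l1 l2) * ennreal (b - a) * (2 * ennreal (W (2 * (l1 + l2) / c)))"
  proof -
  have "emeasure ?M ?B = (\<integral>\<^sup>+y. emeasure lborel ((\<lambda>x. (x, y)) -` ?B) \<partial>(lborel \<Otimes>\<^sub>M N))"
    by (rule P.emeasure_pair_measure_alt2[OF Bm])
  also have "\<dots> \<le> (\<integral>\<^sup>+y. ennreal (2 * min l1 l2) * indicator GG y \<partial>(lborel \<Otimes>\<^sub>M N))"
    by (intro nn_integral_mono slice)
  also have "\<dots> = ennreal (2 * min l1 l2) * (\<integral>\<^sup>+y. indicator GG y \<partial>(lborel \<Otimes>\<^sub>M N))"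
    by (rule nn_integral_cmult) measurable
  also have "(\<integral>\<^sup>+y. indicator GG y \<partial>(lborel \<Otimes>\<^sub>M N)) = (\<integral>\<^sup>+\<xi>1. (\<integral>\<^sup>+\<eta>1. indicator GG (\<xi>1, \<eta>1) \<partial>N) \<partial>lborel)"
    by (rule N.nn_integral_fst[symmetric]) measurable
  also have "\<dots> \<le> (\<integral>\<^sup>+\<xi>1. indicator {a..b} \<xi>1 * (2 * ennreal (W D)) \<partial>lborel)"
    by (intro nn_integral_mono inner)
  also have "\<dots> = emeasure lborel {a..b} * (2 * ennreal (W D))"
    by (subst nn_integral_multc) auto
  also have "emeasure lborel {a..b} \<le> ennreal (b - a)"
    by (simp add: emeasure_lborel_Icc_eq)
  finally show ?thesis unfolding D_def
    by (simp add: mult.assoc mult_left_mono mult_right_mono)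
  qed
  thus ?thesis using Bm by blast
qed

lemma minus_eq: "(\<lambda>p::('a::ab_group_add \<times> 'b::ab_group_add \<times> 'c::ab_group_add) \<times> _. fst p - snd p) = (\<lambda>p. (fst (fst p) - fst (snd p), fst (snd (fst p)) - fst (snd (snd p)), snd (snd (fst p)) - snd (snd (snd p))))"
  by (auto simp: fun_eq_iff prod_eq_iff)

lemma distr_pair_inv:
  assumes f: "f \<in> measurable M1 M1" and g: "g \<in> measurable M2 M2"
    and df: "distr M1 M1 f = M1" and dg: "distr M2 M2 g = M2" and sf: "sigma_finite_measure M2"
  shows "distr (M1 \<Otimes>\<^sub>M M2) (M1 \<Otimes>\<^sub>M M2) (\<lambda>(x, y). (f x, g y)) = M1 \<Otimes>\<^sub>M M2"
proof -
  have "distr M1 M1 f \<Otimes>\<^sub>M distr M2 M2 g = distr (M1 \<Otimes>\<^sub>M M2) (M1 \<Otimes>\<^sub>M M2) (\<lambda>(x, y). (f x, g y))"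
    by (rule pair_measure_distr[OF f g]) (simp add: dg sf)
  thus ?thesis using df dg by simp
qed

lemma lborel_shift: "distr lborel lborel (\<lambda>t::real. t - a) = lborel"
proof -
  have "distr lborel lborel (\<lambda>t::real. t - a) = distr lborel borel ((+) (-a))"
    by (rule distr_cong) auto
  also have "\<dots> = lborel" by (rule lborel_distr_plus)
  finally show ?thesis .
qed

lemma count_shift: "distr (count_space UNIV) (count_space UNIV) (\<lambda>t::int. t - a) = count_space UNIV"
proof (rule distr_bij_count_space)
  show "bij_betw (\<lambda>t::int. t - a) UNIV UNIV"
    by (rule bij_betw_byWitness[where f'="\<lambda>t. t + a"]) auto
qed

lemma shift_R2: "distr M_R2 M_R2 (\<lambda>x. x - y) = M_R2"
proof -
  obtain a b c where y: "y = (a, b, c)" by (cases y) auto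
  have e: "(\<lambda>x. x - y) = (\<lambda>(x, z). (x - a, (\<lambda>(u, v). (u - b, v - c)) z))"
    by (auto simp: y fun_eq_iff)
  have inner: "distr (lborel \<Otimes>\<^sub>M lborel) (lborel \<Otimes>\<^sub>M lborel) (\<lambda>(u::real, v::real). (u - b, v - c)) = lborel \<Otimes>\<^sub>M lborel"
    by (rule distr_pair_inv) (auto simp: lborel_shift lborel.sigma_finite_measure_axioms)
  show ?thesis unfolding M_R2_def e
    by (rule distr_pair_inv) (auto simp: inner lborel_shift lborel_pair.sigma_finite_measure_axioms)
qed

lemma shift_RT: "distr M_RT M_RT (\<lambda>x. x - y) = M_RT"
proof -
  obtain a b c where y: "y = (a, b, c)" by (cases y) auto
  have e: "(\<lambda>x. x - y) = (\<lambda>(x, z). (x - a, (\<lambda>(u, v). (u - b, v - c)) z))"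
    by (auto simp: y fun_eq_iff)
  interpret P: pair_sigma_finite lborel "count_space (UNIV::int set)"
    by (intro pair_sigma_finite.intro lborel.sigma_finite_measure_axioms sigma_finite_measure_count_space)
  have inner: "distr (lborel \<Otimes>\<^sub>M count_space UNIV) (lborel \<Otimes>\<^sub>M count_space UNIV) (\<lambda>(u::real, v::int). (u - b, v - c)) = lborel \<Otimes>\<^sub>M count_space UNIV"
    by (rule distr_pair_inv) (auto simp: count_shift lborel_shift sigma_finite_measure_count_space)
  show ?thesis unfolding M_RT_def e
    by (rule distr_pair_inv) (auto simp: inner lborel_shift P.sigma_finite_measure_axioms)
qed

lemma transl_gen:
  assumes "distr M M (\<lambda>x. x - y) = M" and "(\<lambda>x. x - y) \<in> measurable M M" and "h \<in> borel_measurable M"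
  shows "(\<integral>\<^sup>+x. h (x - y) \<partial>M) = (\<integral>\<^sup>+x. h x \<partial>M)"
proof -
  have "(\<integral>\<^sup>+x. h x \<partial>(distr M M (\<lambda>x. x - y))) = (\<integral>\<^sup>+x. h (x - y) \<partial>M)"
    by (rule nn_integral_distr) (use assms in auto)
  thus ?thesis using assms(1) by simp
qed

lemma W_R: "D \<ge> 0 \<Longrightarrow> emeasure lborel ((\<lambda>x::real. x) -` cball u D) \<le> ennreal (2*D)"
  by (simp add: cball_eq_atLeastAtMost)

lemma W_Z:
  assumes "D \<ge> 0"
  shows "emeasure (count_space UNIV) (real_of_int -` cball u D) \<le> ennreal (2*D+1)"
proof -
  have e: "real_of_int -` cball u D = {\<lceil>u-D\<rceil>..\<lfloor>u+D\<rfloor>}"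
    by (auto simp: cball_eq_atLeastAtMost ceiling_le_iff le_floor_iff)
  have "real_of_int (\<lfloor>u+D\<rfloor> - \<lceil>u-D\<rceil> + 1) \<le> 2*D+1"
    using of_int_floor_le[of "u+D"] le_of_int_ceiling[of "u-D"] by (simp; linarith)
  hence "real (nat (\<lfloor>u+D\<rfloor> - \<lceil>u-D\<rceil> + 1)) \<le> 2*D+1" using assms by linarith
  thus ?thesis unfolding e by (simp add: ennreal_of_nat_eq_real_of_nat ennreal_leI)
qed

lemma W_Z': "D \<ge> 0 \<Longrightarrow> emeasure (count_space UNIV) (real_of_int -` cball u D) \<le> ennreal (2*D) + 1"
  using W_Z[of D u] by (simp add: ennreal_plus)

lemma W_R': "D \<ge> 0 \<Longrightarrow> emeasure lborel (cball (u::real) D) \<le> ennreal (2*D)"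
  by (simp add: cball_eq_atLeastAtMost)

lemma dyZ_pos: "dyadic_Z N \<Longrightarrow> N > 0" by (auto simp: dyadic_Z_def)
lemma dyN_pos: "dyadic_N0 L \<Longrightarrow> L > 0" by (auto simp: dyadic_N0_def)

lemma geoR_test:
  "c > 0 \<Longrightarrow> l1 \<ge> 0 \<Longrightarrow> l2 \<ge> 0 \<Longrightarrow> emeasure (lborel \<Otimes>\<^sub>M (lborel \<Otimes>\<^sub>M lborel))
     {(\<tau>1, \<xi>1, \<eta>1::real). a \<le> \<xi>1 \<and> \<xi>1 \<le> b \<and> \<bar>\<tau>1 - omega_alpha \<alpha> \<xi>1 \<eta>1\<bar> \<le> l1
        \<and> \<bar>(\<tau> - \<tau>1) - omega_alpha \<alpha> (\<xi> - \<xi>1) (\<eta> - \<eta>1)\<bar> \<le> l2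
        \<and> \<bar>d_eta_omega \<xi>1 \<eta>1 - d_eta_omega (\<xi> - \<xi>1) (\<eta> - \<eta>1)\<bar> \<ge> c}
   \<le> ennreal (2 * min l1 l2) * ennreal (b - a) * (2 * ennreal (2 * (2 * (l1 + l2) / c)))
   \<and> {(\<tau>1, \<xi>1, \<eta>1::real). a \<le> \<xi>1 \<and> \<xi>1 \<le> b \<and> \<bar>\<tau>1 - omega_alpha \<alpha> \<xi>1 \<eta>1\<bar> \<le> l1
        \<and> \<bar>(\<tau> - \<tau>1) - omega_alpha \<alpha> (\<xi> - \<xi>1) (\<eta> - \<eta>1)\<bar> \<le> l2
        \<and> \<bar>d_eta_omega \<xi>1 \<eta>1 - d_eta_omega (\<xi> - \<xi>1) (\<eta> - \<eta>1)\<bar> \<ge> c} \<in> sets (lborel \<Otimes>\<^sub>M (lborel \<Otimes>\<^sub>M lborel))"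
  by (rule geo[of lborel "\<lambda>x. x" "\<lambda>D. 2*D"]) (auto simp: lborel.sigma_finite_measure_axioms W_R')

lemma geoZ_test:
  "c > 0 \<Longrightarrow> l1 \<ge> 0 \<Longrightarrow> l2 \<ge> 0 \<Longrightarrow> emeasure (lborel \<Otimes>\<^sub>M (lborel \<Otimes>\<^sub>M count_space UNIV))
     {(\<tau>1, \<xi>1, \<eta>1::int). a \<le> \<xi>1 \<and> \<xi>1 \<le> b \<and> \<bar>\<tau>1 - omega_alpha \<alpha> \<xi>1 (real_of_int \<eta>1)\<bar> \<le> l1
        \<and> \<bar>(\<tau> - \<tau>1) - omega_alpha \<alpha> (\<xi> - \<xi>1) (real_of_int (\<eta> - \<eta>1))\<bar> \<le> l2
        \<and> \<bar>d_eta_omega \<xi>1 (real_of_int \<eta>1) - d_eta_omega (\<xi> - \<xi>1) (real_of_int (\<eta> - \<eta>1))\<bar> \<ge> c}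
   \<le> ennreal (2 * min l1 l2) * ennreal (b - a) * (2 * ennreal (2 * (2 * (l1 + l2) / c) + 1))
   \<and> {(\<tau>1, \<xi>1, \<eta>1::int). a \<le> \<xi>1 \<and> \<xi>1 \<le> b \<and> \<bar>\<tau>1 - omega_alpha \<alpha> \<xi>1 (real_of_int \<eta>1)\<bar> \<le> l1
        \<and> \<bar>(\<tau> - \<tau>1) - omega_alpha \<alpha> (\<xi> - \<xi>1) (real_of_int (\<eta> - \<eta>1))\<bar> \<le> l2
        \<and> \<bar>d_eta_omega \<xi>1 (real_of_int \<eta>1) - d_eta_omega (\<xi> - \<xi>1) (real_of_int (\<eta> - \<eta>1))\<bar> \<ge> c} \<in> sets (lborel \<Otimes>\<^sub>M (lborel \<Otimes>\<^sub>M count_space UNIV))"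
  by (rule geo[of "count_space UNIV" real_of_int "\<lambda>D. 2*D+1"]) (auto simp: sigma_finite_measure_count_space W_Z')

lemma t1: fixes cL cI cT Lm Nm L1 L2 P :: real assumes "cT > 0" "P > 0"
  shows "2 * (cL * Lm) * (cI * Nm) * (2 * (2 * (2 * (cL * L1 + cL * L2) / (cT * P))))
        = (16*cL\<^sup>2*cI/cT) * Nm * Lm * ((L1 + L2) / P)"
  using assms by (simp add: field_simps power2_eq_square)
lemma t2: fixes A B Cc :: real assumes "A \<ge> 0" "B \<ge> 0" "Cc \<ge> 0"
  shows "ennreal A * ennreal B * (2 * ennreal Cc) = ennreal (A * B * (2 * Cc))"
proof -
  have "ennreal (A * B * (2 * Cc)) = ennreal (A * B) * ennreal (2 * Cc)"
    using assms by (intro ennreal_mult) auto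
  also have "\<dots> = ennreal A * ennreal B * (ennreal 2 * ennreal Cc)"
    using assms by (simp add: ennreal_mult)
  finally show ?thesis by simp
qed
lemma t3: fixes cL cI cT Nm Lm L1 L2 P LM :: real assumes "cL > 0" "cI > 0" "cT > 0" "Nm > 0" "Lm > 0" "L1 > 0" "L2 > 0" "P > 0"
  and "L1 \<le> LM" "L2 \<le> LM"
  shows "(16*cL\<^sup>2*cI/cT) * Nm * Lm * ((L1 + L2) / P) \<le> (16*cL\<^sup>2*cI/cT) * Nm * Lm * (2 * (LM / P))"
proof (rule mult_left_mono)
  show "(L1 + L2) / P \<le> 2 * (LM / P)" using assms by (simp add: divide_right_mono)
  show "0 \<le> 16*cL\<^sup>2*cI/cT * Nm * Lm" using assms by simp
qed

lemma caseR:
  fixes f1 f2 :: "real \<times> real \<times> real \<Rightarrow> complex"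
  assumes cI: "cI > 0" and cL: "cL > 0" and cT: "cT > 0"
   and dN1: "dyadic_Z N1" and dN2: "dyadic_Z N2" and dL1: "dyadic_N0 L1" and dL2: "dyadic_N0 L2"
   and f1m: "f1 \<in> borel_measurable M_R2" and f2m: "f2 \<in> borel_measurable M_R2"
   and ab: "\<exists>a b. (\<lambda>(\<tau>,\<xi>,\<eta>). \<xi>) ` supp f1 \<subseteq> {a..b} \<and> b - a \<le> cI * min N1 N2"
   and s1: "\<forall>(\<tau>,\<xi>,\<eta>) \<in> supp f1. \<bar>\<tau> - omega_alpha \<alpha> \<xi> \<eta>\<bar> \<le> cL * L1"
   and s2: "\<forall>(\<tau>,\<xi>,\<eta>) \<in> supp f2. \<bar>\<tau> - omega_alpha \<alpha> \<xi> \<eta>\<bar> \<le> cL * L2"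
   and tr: "\<forall>\<xi> \<eta> \<xi>1 \<eta>1.
          (\<xi>1, \<eta>1) \<in> (\<lambda>(\<tau>,\<xi>,\<eta>). (\<xi>,\<eta>)) ` supp f1 \<and>
          (\<xi> - \<xi>1, \<eta> - \<eta>1) \<in> (\<lambda>(\<tau>,\<xi>,\<eta>). (\<xi>,\<eta>)) ` supp f2 \<longrightarrow>
          \<bar>d_eta_omega \<xi>1 \<eta>1 - d_eta_omega (\<xi> - \<xi>1) (\<eta> - \<eta>1)\<bar>
             \<ge> cT * max N1 N2 powr (\<alpha>/2)"
  shows "L2sq M_R2 (conv M_R2 f1 f2)
          \<le> ennreal ((32*cL\<^sup>2*cI/cT) * min N1 N2 * min L1 L2 * (C1_R2 \<alpha> (max L1 L2) (max N1 N2))\<^sup>2)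
             * L2sq M_R2 f1 * L2sq M_R2 f2"
proof -
  obtain a b where ab1: "(\<lambda>(\<tau>,\<xi>,\<eta>). \<xi>) ` supp f1 \<subseteq> {a..b}" and ab2: "b - a \<le> cI * min N1 N2"
    using ab by blast
  have N1p: "N1 > 0" and N2p: "N2 > 0" and L1p: "L1 > 0" and L2p: "L2 > 0"
    using dN1 dN2 dL1 dL2 by (auto simp: dyZ_pos dyN_pos)
  define P where "P = max N1 N2 powr (\<alpha>/2)"
  have Pp: "P > 0" using N1p N2p by (simp add: P_def)
  define c where "c = cT * P"
  have cp: "c > 0" using cT Pp by (simp add: c_def)
  define l1 where "l1 = cL * L1"
  define l2 where "l2 = cL * L2"
  have l1p: "l1 \<ge> 0" and l2p: "l2 \<ge> 0" using cL L1p L2p by (auto simp: l1_def l2_def)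
  define K where "K = ennreal (2 * min l1 l2) * ennreal (b - a) * (2 * ennreal (2 * (2 * (l1 + l2) / c)))"
  have bnd: "emeasure M_R2 {y. f1 y \<noteq> 0 \<and> f2 (x - y) \<noteq> 0} \<le> K" for x
  proof -
    obtain \<tau> \<xi> \<eta> where x: "x = (\<tau>, \<xi>, \<eta>)" by (cases x) auto
    note g = geoR_test[OF cp l1p l2p, of a b \<alpha> \<tau> \<xi> \<eta>]
    have sub: "{y. f1 y \<noteq> 0 \<and> f2 (x - y) \<noteq> 0} \<subseteq> {(\<tau>1, \<xi>1, \<eta>1::real). a \<le> \<xi>1 \<and> \<xi>1 \<le> b \<and> \<bar>\<tau>1 - omega_alpha \<alpha> \<xi>1 \<eta>1\<bar> \<le> l1
        \<and> \<bar>(\<tau> - \<tau>1) - omega_alpha \<alpha> (\<xi> - \<xi>1) (\<eta> - \<eta>1)\<bar> \<le> l2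
        \<and> \<bar>d_eta_omega \<xi>1 \<eta>1 - d_eta_omega (\<xi> - \<xi>1) (\<eta> - \<eta>1)\<bar> \<ge> c}"
    proof (intro subsetI)
      fix y assume "y \<in> {y. f1 y \<noteq> 0 \<and> f2 (x - y) \<noteq> 0}"
      hence h1: "f1 y \<noteq> 0" and h2: "f2 (x - y) \<noteq> 0" by auto
      obtain \<tau>1 \<xi>1 \<eta>1 where y: "y = (\<tau>1, \<xi>1, \<eta>1)" by (cases y) auto
      have "y \<in> supp f1" unfolding supp_def using h1 by (intro closure_subset[THEN subsetD]) simp
      hence y1: "(\<tau>1, \<xi>1, \<eta>1) \<in> supp f1" unfolding y .
      have "x - y \<in> supp f2" unfolding supp_def using h2 by (intro closure_subset[THEN subsetD]) simp
      hence y2: "(\<tau> - \<tau>1, \<xi> - \<xi>1, \<eta> - \<eta>1) \<in> supp f2" unfolding y x by simp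
      have "\<xi>1 \<in> (\<lambda>(\<tau>,\<xi>,\<eta>). \<xi>) ` supp f1" using y1 by (auto intro!: rev_image_eqI)
      hence abx: "a \<le> \<xi>1 \<and> \<xi>1 \<le> b" using ab1 by auto
      have t1: "\<bar>\<tau>1 - omega_alpha \<alpha> \<xi>1 \<eta>1\<bar> \<le> l1" using bspec[OF s1 y1] unfolding l1_def by simp
      have t2: "\<bar>(\<tau> - \<tau>1) - omega_alpha \<alpha> (\<xi> - \<xi>1) (\<eta> - \<eta>1)\<bar> \<le> l2" using bspec[OF s2 y2] unfolding l2_def by simp
      have im1: "(\<xi>1, \<eta>1) \<in> (\<lambda>(\<tau>,\<xi>,\<eta>). (\<xi>,\<eta>)) ` supp f1" using y1 by (auto intro!: rev_image_eqI)
      have im2: "(\<xi> - \<xi>1, \<eta> - \<eta>1) \<in> (\<lambda>(\<tau>,\<xi>,\<eta>). (\<xi>,\<eta>)) ` supp f2" using y2 by (auto intro!: rev_image_eqI)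
      have t3: "\<bar>d_eta_omega \<xi>1 \<eta>1 - d_eta_omega (\<xi> - \<xi>1) (\<eta> - \<eta>1)\<bar> \<ge> c"
        using tr[rule_format, OF conjI[OF im1 im2]] unfolding c_def P_def .
      show "y \<in> {(\<tau>1, \<xi>1, \<eta>1::real). a \<le> \<xi>1 \<and> \<xi>1 \<le> b \<and> \<bar>\<tau>1 - omega_alpha \<alpha> \<xi>1 \<eta>1\<bar> \<le> l1
        \<and> \<bar>(\<tau> - \<tau>1) - omega_alpha \<alpha> (\<xi> - \<xi>1) (\<eta> - \<eta>1)\<bar> \<le> l2
        \<and> \<bar>d_eta_omega \<xi>1 \<eta>1 - d_eta_omega (\<xi> - \<xi>1) (\<eta> - \<eta>1)\<bar> \<ge> c}"
        using abx t1 t2 t3 unfolding y by simp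
    qed
    have "emeasure M_R2 {y. f1 y \<noteq> 0 \<and> f2 (x - y) \<noteq> 0} \<le> emeasure M_R2 {(\<tau>1, \<xi>1, \<eta>1::real). a \<le> \<xi>1 \<and> \<xi>1 \<le> b \<and> \<bar>\<tau>1 - omega_alpha \<alpha> \<xi>1 \<eta>1\<bar> \<le> l1
        \<and> \<bar>(\<tau> - \<tau>1) - omega_alpha \<alpha> (\<xi> - \<xi>1) (\<eta> - \<eta>1)\<bar> \<le> l2
        \<and> \<bar>d_eta_omega \<xi>1 \<eta>1 - d_eta_omega (\<xi> - \<xi>1) (\<eta> - \<eta>1)\<bar> \<ge> c}"
      unfolding M_R2_def by (rule emeasure_mono[OF sub conjunct2[OF g]])
    also have "\<dots> \<le> K" unfolding M_R2_def K_def by (rule conjunct1[OF g])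
    finally show ?thesis .
  qed
  have main: "L2sq M_R2 (conv M_R2 f1 f2) \<le> K * L2sq M_R2 f1 * L2sq M_R2 f2"
  proof (rule abstract_bound[OF _ _ _ _ f1m f2m bnd])
    show "sigma_finite_measure M_R2"
    proof -
      interpret PP: pair_sigma_finite lborel "lborel \<Otimes>\<^sub>M lborel"
        by (rule pair_sigma_finite.intro[OF lborel.sigma_finite_measure_axioms lborel_pair.sigma_finite_measure_axioms])
      show ?thesis unfolding M_R2_def by (rule PP.sigma_finite_measure_axioms)
    qed
    show "space M_R2 = UNIV" by (simp add: M_R2_def space_pair_measure)
    show "(\<lambda>p. fst p - snd p) \<in> M_R2 \<Otimes>\<^sub>M M_R2 \<rightarrow>\<^sub>M M_R2"
      unfolding M_R2_def minus_eq by measurable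
    fix y :: "real \<times> real \<times> real" and h :: "real \<times> real \<times> real \<Rightarrow> ennreal" assume hm: "h \<in> borel_measurable M_R2"
    have e: "(\<lambda>x. x - y) = (\<lambda>x. (fst x - fst y, fst (snd x) - fst (snd y), snd (snd x) - snd (snd y)))"
      by (auto simp: fun_eq_iff prod_eq_iff)
    have "(\<lambda>x. x - y) \<in> M_R2 \<rightarrow>\<^sub>M M_R2" unfolding e M_R2_def by measurable
    then show "(\<integral>\<^sup>+x. h (x - y) \<partial>M_R2) = (\<integral>\<^sup>+x. h x \<partial>M_R2)"
      by (intro transl_gen shift_R2 hm)
  qed
  have "K \<le> ennreal (2 * min l1 l2) * ennreal (cI * min N1 N2) * (2 * ennreal (2 * (2 * (l1 + l2) / c)))"
  proof -
    have "ennreal (b - a) \<le> ennreal (cI * min N1 N2)" using ab2 by (rule ennreal_leI)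
    hence "ennreal (2 * min l1 l2) * ennreal (b - a) \<le> ennreal (2 * min l1 l2) * ennreal (cI * min N1 N2)"
      by (rule mult_left_mono) simp
    thus ?thesis unfolding K_def by (rule mult_right_mono) simp
  qed
  also have "\<dots> = ennreal (2 * min l1 l2 * (cI * min N1 N2) * (2 * (2 * (2 * (l1 + l2) / c))))"
    using l1p l2p cp cI N1p N2p by (intro t2) auto
  also have "\<dots> \<le> ennreal ((32*cL\<^sup>2*cI/cT) * min N1 N2 * min L1 L2 * (C1_R2 \<alpha> (max L1 L2) (max N1 N2))\<^sup>2)"
  proof (rule ennreal_leI)
    have C1: "(C1_R2 \<alpha> (max L1 L2) (max N1 N2))\<^sup>2 = max L1 L2 / P"
      unfolding C1_R2_def P_def using L1p L2p N1p N2p by simp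
    have mn: "min l1 l2 = cL * min L1 L2" unfolding l1_def l2_def using cL by (simp add: min_mult_distrib_left)
    have "2 * min l1 l2 * (cI * min N1 N2) * (2 * (2 * (2 * (l1 + l2) / c)))
        = (16*cL\<^sup>2*cI/cT) * min N1 N2 * min L1 L2 * ((L1 + L2) / P)"
      unfolding mn unfolding c_def l1_def l2_def by (rule t1[OF cT Pp])
    also have "\<dots> \<le> (16*cL\<^sup>2*cI/cT) * min N1 N2 * min L1 L2 * (2 * (max L1 L2 / P))"
      using cL cI cT N1p N2p L1p L2p Pp by (intro t3) auto
    also have "\<dots> = (32*cL\<^sup>2*cI/cT) * min N1 N2 * min L1 L2 * (C1_R2 \<alpha> (max L1 L2) (max N1 N2))\<^sup>2"
      unfolding C1 by simp
    finally show "2 * min l1 l2 * (cI * min N1 N2) * (2 * (2 * (2 * (l1 + l2) / c)))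
        \<le> (32*cL\<^sup>2*cI/cT) * min N1 N2 * min L1 L2 * (C1_R2 \<alpha> (max L1 L2) (max N1 N2))\<^sup>2" .
  qed
  finally have "K \<le> ennreal ((32*cL\<^sup>2*cI/cT) * min N1 N2 * min L1 L2 * (C1_R2 \<alpha> (max L1 L2) (max N1 N2))\<^sup>2)" .
  hence "K * L2sq M_R2 f1 * L2sq M_R2 f2 \<le> ennreal ((32*cL\<^sup>2*cI/cT) * min N1 N2 * min L1 L2 * (C1_R2 \<alpha> (max L1 L2) (max N1 N2))\<^sup>2) * L2sq M_R2 f1 * L2sq M_R2 f2"
    by (intro mult_right_mono) auto
  with main show ?thesis by (rule order_trans)
qed

lemma tz1: fixes cL cT L1 L2 P :: real assumes "cT > 0" "P > 0"
  shows "2 * (2 * (cL * L1 + cL * L2) / (cT * P)) = (4*cL/cT) * ((L1 + L2) / P)"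
  using assms by (simp add: field_simps)
lemma tz2: fixes r :: real assumes "r \<ge> 0" shows "r + 1 \<le> 2 * japanese r"
proof -
  have "(r+1)\<^sup>2 = 4*(1+r\<^sup>2) - (2*r\<^sup>2 + (r-1)\<^sup>2 + 2)" by (simp add: power2_eq_square algebra_simps)
  also have "\<dots> \<le> 4*(1+r\<^sup>2)" using zero_le_power2[of "r-1"] zero_le_power2[of r] by linarith
  finally have "((r+1)/2)\<^sup>2 \<le> 1 + r\<^sup>2" by (simp add: power_divide)
  hence "(r+1)/2 \<le> sqrt (1 + r\<^sup>2)" by (rule real_le_rsqrt)
  thus ?thesis unfolding japanese_def by simp
qed
lemma tz3: fixes cL cT L1 L2 P LM :: real assumes "cL > 0" "cT > 0" "P > 0" "L1 \<le> LM" "L2 \<le> LM"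
  shows "(4*cL/cT) * ((L1 + L2) / P) \<le> (4*cL/cT) * (2 * (LM / P))"
proof (rule mult_left_mono)
  show "(L1 + L2) / P \<le> 2 * (LM / P)" using assms by (simp add: divide_right_mono)
  show "0 \<le> 4*cL/cT" using assms by simp
qed
lemma tz4: fixes X k r :: real assumes "X \<le> k * (2 * r)" "k \<ge> 0" "r \<ge> 0"
  shows "X + 1 \<le> (2*k + 1) * (r + 1)"
  using assms by (simp add: algebra_simps)
lemma tz5: fixes A B Y :: real shows "2 * (cL * Lm) * (cI * Nm) * (2 * Y) = (4*cL*cI) * Nm * Lm * Y"
  by (simp add: algebra_simps)

lemma caseZ:
  fixes f1 f2 :: "real \<times> real \<times> int \<Rightarrow> complex"
  assumes cI: "cI > 0" and cL: "cL > 0" and cT: "cT > 0"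
   and dN1: "dyadic_Z N1" and dN2: "dyadic_Z N2" and dL1: "dyadic_N0 L1" and dL2: "dyadic_N0 L2"
   and f1m: "f1 \<in> borel_measurable M_RT" and f2m: "f2 \<in> borel_measurable M_RT"
   and ab: "\<exists>a b. (\<lambda>(\<tau>,\<xi>,\<eta>). \<xi>) ` supp f1 \<subseteq> {a..b} \<and> b - a \<le> cI * min N1 N2"
   and s1: "\<forall>(\<tau>,\<xi>,\<eta>) \<in> supp f1. \<bar>\<tau> - omega_alpha \<alpha> \<xi> (real_of_int \<eta>)\<bar> \<le> cL * L1"
   and s2: "\<forall>(\<tau>,\<xi>,\<eta>) \<in> supp f2. \<bar>\<tau> - omega_alpha \<alpha> \<xi> (real_of_int \<eta>)\<bar> \<le> cL * L2"
   and tr: "\<forall>\<xi> (\<eta>::int) \<xi>1 (\<eta>1::int).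
          (\<xi>1, \<eta>1) \<in> (\<lambda>(\<tau>,\<xi>,\<eta>). (\<xi>,\<eta>)) ` supp f1 \<and>
          (\<xi> - \<xi>1, \<eta> - \<eta>1) \<in> (\<lambda>(\<tau>,\<xi>,\<eta>). (\<xi>,\<eta>)) ` supp f2 \<longrightarrow>
          \<bar>d_eta_omega \<xi>1 (real_of_int \<eta>1) - d_eta_omega (\<xi> - \<xi>1) (real_of_int (\<eta> - \<eta>1))\<bar>
             \<ge> cT * max N1 N2 powr (\<alpha>/2)"
  shows "L2sq M_RT (conv M_RT f1 f2)
          \<le> ennreal ((8*cL*cI*(8*cL/cT+1)) * min N1 N2 * min L1 L2 * (C1_RT \<alpha> (max L1 L2) (max N1 N2))\<^sup>2)
             * L2sq M_RT f1 * L2sq M_RT f2"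
proof -
  obtain a b where ab1: "(\<lambda>(\<tau>,\<xi>,\<eta>). \<xi>) ` supp f1 \<subseteq> {a..b}" and ab2: "b - a \<le> cI * min N1 N2"
    using ab by blast
  have N1p: "N1 > 0" and N2p: "N2 > 0" and L1p: "L1 > 0" and L2p: "L2 > 0"
    using dN1 dN2 dL1 dL2 by (auto simp: dyZ_pos dyN_pos)
  define P where "P = max N1 N2 powr (\<alpha>/2)"
  have Pp: "P > 0" using N1p N2p by (simp add: P_def)
  define c where "c = cT * P"
  have cp: "c > 0" using cT Pp by (simp add: c_def)
  define l1 where "l1 = cL * L1"
  define l2 where "l2 = cL * L2"
  have l1p: "l1 \<ge> 0" and l2p: "l2 \<ge> 0" using cL L1p L2p by (auto simp: l1_def l2_def)
  define K where "K = ennreal (2 * min l1 l2) * ennreal (b - a) * (2 * ennreal (2 * (2 * (l1 + l2) / c) + 1))"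
  have bnd: "emeasure M_RT {y. f1 y \<noteq> 0 \<and> f2 (x - y) \<noteq> 0} \<le> K" for x
  proof -
    obtain \<tau> \<xi> \<eta> where x: "x = (\<tau>, \<xi>, \<eta>)" by (cases x) auto
    note g = geoZ_test[OF cp l1p l2p, of a b \<alpha> \<tau> \<xi> \<eta>]
    have sub: "{y. f1 y \<noteq> 0 \<and> f2 (x - y) \<noteq> 0} \<subseteq> {(\<tau>1, \<xi>1, \<eta>1::int). a \<le> \<xi>1 \<and> \<xi>1 \<le> b \<and> \<bar>\<tau>1 - omega_alpha \<alpha> \<xi>1 (real_of_int \<eta>1)\<bar> \<le> l1
        \<and> \<bar>(\<tau> - \<tau>1) - omega_alpha \<alpha> (\<xi> - \<xi>1) (real_of_int (\<eta> - \<eta>1))\<bar> \<le> l2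
        \<and> \<bar>d_eta_omega \<xi>1 (real_of_int \<eta>1) - d_eta_omega (\<xi> - \<xi>1) (real_of_int (\<eta> - \<eta>1))\<bar> \<ge> c}"
    proof (intro subsetI)
      fix y assume "y \<in> {y. f1 y \<noteq> 0 \<and> f2 (x - y) \<noteq> 0}"
      hence h1: "f1 y \<noteq> 0" and h2: "f2 (x - y) \<noteq> 0" by auto
      obtain \<tau>1 \<xi>1 \<eta>1 where y: "y = (\<tau>1, \<xi>1, \<eta>1)" by (cases y) auto
      have "y \<in> supp f1" unfolding supp_def using h1 by (intro closure_subset[THEN subsetD]) simp
      hence y1: "(\<tau>1, \<xi>1, \<eta>1) \<in> supp f1" unfolding y .
      have "x - y \<in> supp f2" unfolding supp_def using h2 by (intro closure_subset[THEN subsetD]) simp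
      hence y2: "(\<tau> - \<tau>1, \<xi> - \<xi>1, \<eta> - \<eta>1) \<in> supp f2" unfolding y x by simp
      have "\<xi>1 \<in> (\<lambda>(\<tau>,\<xi>,\<eta>). \<xi>) ` supp f1" using y1 by (auto intro!: rev_image_eqI)
      hence abx: "a \<le> \<xi>1 \<and> \<xi>1 \<le> b" using ab1 by auto
      have t1: "\<bar>\<tau>1 - omega_alpha \<alpha> \<xi>1 (real_of_int \<eta>1)\<bar> \<le> l1" using bspec[OF s1 y1] unfolding l1_def by simp
      have t2: "\<bar>(\<tau> - \<tau>1) - omega_alpha \<alpha> (\<xi> - \<xi>1) (real_of_int (\<eta> - \<eta>1))\<bar> \<le> l2" using bspec[OF s2 y2] unfolding l2_def by simp
      have im1: "(\<xi>1, \<eta>1) \<in> (\<lambda>(\<tau>,\<xi>,\<eta>). (\<xi>,\<eta>)) ` supp f1" using y1 by (auto intro!: rev_image_eqI)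
      have im2: "(\<xi> - \<xi>1, \<eta> - \<eta>1) \<in> (\<lambda>(\<tau>,\<xi>,\<eta>). (\<xi>,\<eta>)) ` supp f2" using y2 by (auto intro!: rev_image_eqI)
      have t3: "\<bar>d_eta_omega \<xi>1 (real_of_int \<eta>1) - d_eta_omega (\<xi> - \<xi>1) (real_of_int (\<eta> - \<eta>1))\<bar> \<ge> c"
        using tr[rule_format, OF conjI[OF im1 im2]] unfolding c_def P_def .
      show "y \<in> {(\<tau>1, \<xi>1, \<eta>1::int). a \<le> \<xi>1 \<and> \<xi>1 \<le> b \<and> \<bar>\<tau>1 - omega_alpha \<alpha> \<xi>1 (real_of_int \<eta>1)\<bar> \<le> l1
        \<and> \<bar>(\<tau> - \<tau>1) - omega_alpha \<alpha> (\<xi> - \<xi>1) (real_of_int (\<eta> - \<eta>1))\<bar> \<le> l2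
        \<and> \<bar>d_eta_omega \<xi>1 (real_of_int \<eta>1) - d_eta_omega (\<xi> - \<xi>1) (real_of_int (\<eta> - \<eta>1))\<bar> \<ge> c}"
        using abx t1 t2 t3 unfolding y by simp
    qed
    have "emeasure M_RT {y. f1 y \<noteq> 0 \<and> f2 (x - y) \<noteq> 0} \<le> emeasure M_RT {(\<tau>1, \<xi>1, \<eta>1::int). a \<le> \<xi>1 \<and> \<xi>1 \<le> b \<and> \<bar>\<tau>1 - omega_alpha \<alpha> \<xi>1 (real_of_int \<eta>1)\<bar> \<le> l1
        \<and> \<bar>(\<tau> - \<tau>1) - omega_alpha \<alpha> (\<xi> - \<xi>1) (real_of_int (\<eta> - \<eta>1))\<bar> \<le> l2
        \<and> \<bar>d_eta_omega \<xi>1 (real_of_int \<eta>1) - d_eta_omega (\<xi> - \<xi>1) (real_of_int (\<eta> - \<eta>1))\<bar> \<ge> c}"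
      unfolding M_RT_def by (rule emeasure_mono[OF sub conjunct2[OF g]])
    also have "\<dots> \<le> K" unfolding M_RT_def K_def by (rule conjunct1[OF g])
    finally show ?thesis .
  qed
  have main: "L2sq M_RT (conv M_RT f1 f2) \<le> K * L2sq M_RT f1 * L2sq M_RT f2"
  proof (rule abstract_bound[OF _ _ _ _ f1m f2m bnd])
    show "sigma_finite_measure M_RT"
    proof -
      interpret P1: pair_sigma_finite lborel "count_space (UNIV::int set)"
        by (rule pair_sigma_finite.intro[OF lborel.sigma_finite_measure_axioms sigma_finite_measure_count_space])
      interpret PP: pair_sigma_finite lborel "lborel \<Otimes>\<^sub>M count_space (UNIV::int set)"
        by (rule pair_sigma_finite.intro[OF lborel.sigma_finite_measure_axioms P1.sigma_finite_measure_axioms])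
      show ?thesis unfolding M_RT_def by (rule PP.sigma_finite_measure_axioms)
    qed
    show "space M_RT = UNIV" by (simp add: M_RT_def space_pair_measure)
    show "(\<lambda>p. fst p - snd p) \<in> M_RT \<Otimes>\<^sub>M M_RT \<rightarrow>\<^sub>M M_RT"
      unfolding M_RT_def minus_eq by measurable
    fix y :: "real \<times> real \<times> int" and h :: "real \<times> real \<times> int \<Rightarrow> ennreal" assume hm: "h \<in> borel_measurable M_RT"
    have e: "(\<lambda>x. x - y) = (\<lambda>x. (fst x - fst y, fst (snd x) - fst (snd y), snd (snd x) - snd (snd y)))"
      by (auto simp: fun_eq_iff prod_eq_iff)
    have "(\<lambda>x. x - y) \<in> M_RT \<rightarrow>\<^sub>M M_RT" unfolding e M_RT_def by measurable
    then show "(\<integral>\<^sup>+x. h (x - y) \<partial>M_RT) = (\<integral>\<^sup>+x. h x \<partial>M_RT)"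
      by (intro transl_gen shift_RT hm)
  qed
  have "K \<le> ennreal (2 * min l1 l2) * ennreal (cI * min N1 N2) * (2 * ennreal (2 * (2 * (l1 + l2) / c) + 1))"
  proof -
    have "ennreal (b - a) \<le> ennreal (cI * min N1 N2)" using ab2 by (rule ennreal_leI)
    hence "ennreal (2 * min l1 l2) * ennreal (b - a) \<le> ennreal (2 * min l1 l2) * ennreal (cI * min N1 N2)"
      by (rule mult_left_mono) simp
    thus ?thesis unfolding K_def by (rule mult_right_mono) simp
  qed
  also have "\<dots> = ennreal (2 * min l1 l2 * (cI * min N1 N2) * (2 * (2 * (2 * (l1 + l2) / c) + 1)))"
    using l1p l2p cp cI N1p N2p by (intro t2) auto
  also have "\<dots> \<le> ennreal ((8*cL*cI*(8*cL/cT+1)) * min N1 N2 * min L1 L2 * (C1_RT \<alpha> (max L1 L2) (max N1 N2))\<^sup>2)"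
  proof (rule ennreal_leI)
    define r where "r = max L1 L2 / P"
    have r0: "r \<ge> 0" unfolding r_def using L1p L2p Pp by auto
    have C1: "(C1_RT \<alpha> (max L1 L2) (max N1 N2))\<^sup>2 = japanese r"
      unfolding C1_RT_def r_def P_def japanese_def by simp
    have jr: "r + 1 \<le> 2 * japanese r" by (rule tz2[OF r0])
    have mn: "min l1 l2 = cL * min L1 L2" unfolding l1_def l2_def using cL by (simp add: min_mult_distrib_left)
    have q0: "2 * (2 * (l1 + l2) / c) \<le> (4*cL/cT) * (2 * r)"
      unfolding c_def l1_def l2_def tz1[OF cT Pp] r_def using cL cT Pp by (intro tz3) auto
    have q: "2 * (2 * (l1 + l2) / c) + 1 \<le> (2*(4*cL/cT) + 1) * (r + 1)"
      using q0 cL cT r0 by (intro tz4) auto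
    have "2 * min l1 l2 * (cI * min N1 N2) * (2 * (2 * (2 * (l1 + l2) / c) + 1))
        = (4*cL*cI) * min N1 N2 * min L1 L2 * (2 * (2 * (l1 + l2) / c) + 1)"
      unfolding mn by (rule tz5)
    also have "\<dots> \<le> (4*cL*cI) * min N1 N2 * min L1 L2 * ((2*(4*cL/cT) + 1) * (2 * japanese r))"
    proof -
      have "(2*(4*cL/cT) + 1) * (r + 1) \<le> (2*(4*cL/cT) + 1) * (2 * japanese r)"
        using jr cL cT by (intro mult_left_mono) auto
      hence "2 * (2 * (l1 + l2) / c) + 1 \<le> (2*(4*cL/cT) + 1) * (2 * japanese r)"
        using q by linarith
      moreover have "0 \<le> (4*cL*cI) * min N1 N2 * min L1 L2" using cL cI N1p N2p L1p L2p by simp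
      ultimately show ?thesis by (rule mult_left_mono)
    qed
    also have "\<dots> = (8*cL*cI*(8*cL/cT+1)) * min N1 N2 * min L1 L2 * (C1_RT \<alpha> (max L1 L2) (max N1 N2))\<^sup>2"
      unfolding C1 by (simp add: algebra_simps)
    finally show "2 * min l1 l2 * (cI * min N1 N2) * (2 * (2 * (2 * (l1 + l2) / c) + 1))
        \<le> (8*cL*cI*(8*cL/cT+1)) * min N1 N2 * min L1 L2 * (C1_RT \<alpha> (max L1 L2) (max N1 N2))\<^sup>2" .
  qed
  finally have "K \<le> ennreal ((8*cL*cI*(8*cL/cT+1)) * min N1 N2 * min L1 L2 * (C1_RT \<alpha> (max L1 L2) (max N1 N2))\<^sup>2)" .
  hence "K * L2sq M_RT f1 * L2sq M_RT f2 \<le> ennreal ((8*cL*cI*(8*cL/cT+1)) * min N1 N2 * min L1 L2 * (C1_RT \<alpha> (max L1 L2) (max N1 N2))\<^sup>2) * L2sq M_RT f1 * L2sq M_RT f2"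
    by (intro mult_right_mono) auto
  with main show ?thesis by (rule order_trans)
qed

lemma nn_consts:
  fixes cI cL cT :: real
  assumes "cI > 0" "cL > 0" "cT > 0"
  shows "0 \<le> 32*cL\<^sup>2*cI/cT" "0 \<le> 8*cL*cI*(8*cL/cT+1)"
    "0 < 32*cL\<^sup>2*cI/cT" "0 < 8*cL*cI*(8*cL/cT+1)"
proof -
  have a: "0 < 8*cL/cT+1" using assms by (intro add_pos_pos divide_pos_pos) auto
  have b: "0 < 32*cL\<^sup>2*cI/cT" using assms by (intro divide_pos_pos mult_pos_pos) auto
  have c: "0 < 8*cL*cI*(8*cL/cT+1)" using assms a by (intro mult_pos_pos) auto
  show "0 \<le> 32*cL\<^sup>2*cI/cT" "0 \<le> 8*cL*cI*(8*cL/cT+1)"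
    "0 < 32*cL\<^sup>2*cI/cT" "0 < 8*cL*cI*(8*cL/cT+1)" using b c by auto
qed

theorem proposition4p1:
  fixes \<alpha> cI cL cT :: real
  assumes "\<alpha> \<ge> 2" and "cI > 0" and "cL > 0" and "cT > 0"
  shows
   "(\<exists>C>0. \<forall>(N1::real) (N2::real) (L1::real) (L2::real)
          (f1::real \<times> real \<times> real \<Rightarrow> complex) (f2::real \<times> real \<times> real \<Rightarrow> complex).
      dyadic_Z N1 \<and> dyadic_Z N2 \<and> dyadic_N0 L1 \<and> dyadic_N0 L2 \<and>
      f1 \<in> borel_measurable M_R2 \<and> f2 \<in> borel_measurable M_R2 \<and>
      (\<exists>a b. (\<lambda>(\<tau>,\<xi>,\<eta>). \<xi>) ` supp f1 \<subseteq> {a..b} \<and> b - a \<le> cI * min N1 N2) \<and>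
      (\<exists>a b. (\<lambda>(\<tau>,\<xi>,\<eta>). \<xi>) ` supp f2 \<subseteq> {a..b} \<and> b - a \<le> cI * min N1 N2) \<and>
      (\<forall>(\<tau>,\<xi>,\<eta>) \<in> supp f1. \<bar>\<tau> - omega_alpha \<alpha> \<xi> \<eta>\<bar> \<le> cL * L1) \<and>
      (\<forall>(\<tau>,\<xi>,\<eta>) \<in> supp f2. \<bar>\<tau> - omega_alpha \<alpha> \<xi> \<eta>\<bar> \<le> cL * L2) \<and>
      (\<forall>\<xi> \<eta> \<xi>1 \<eta>1.
          (\<xi>1, \<eta>1) \<in> (\<lambda>(\<tau>,\<xi>,\<eta>). (\<xi>,\<eta>)) ` supp f1 \<and>
          (\<xi> - \<xi>1, \<eta> - \<eta>1) \<in> (\<lambda>(\<tau>,\<xi>,\<eta>). (\<xi>,\<eta>)) ` supp f2 \<longrightarrow>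
          \<bar>d_eta_omega \<xi>1 \<eta>1 - d_eta_omega (\<xi> - \<xi>1) (\<eta> - \<eta>1)\<bar>
             \<ge> cT * max N1 N2 powr (\<alpha>/2))
      \<longrightarrow> L2sq M_R2 (conv M_R2 f1 f2)
          \<le> ennreal (C\<^sup>2 * min N1 N2 * min L1 L2 * (C1_R2 \<alpha> (max L1 L2) (max N1 N2))\<^sup>2)
             * L2sq M_R2 f1 * L2sq M_R2 f2)
  \<and> (\<exists>C>0. \<forall>(N1::real) (N2::real) (L1::real) (L2::real)
          (f1::real \<times> real \<times> int \<Rightarrow> complex) (f2::real \<times> real \<times> int \<Rightarrow> complex).
      dyadic_Z N1 \<and> dyadic_Z N2 \<and> dyadic_N0 L1 \<and> dyadic_N0 L2 \<and>
      f1 \<in> borel_measurable M_RT \<and> f2 \<in> borel_measurable M_RT \<and>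
      (\<exists>a b. (\<lambda>(\<tau>,\<xi>,\<eta>). \<xi>) ` supp f1 \<subseteq> {a..b} \<and> b - a \<le> cI * min N1 N2) \<and>
      (\<exists>a b. (\<lambda>(\<tau>,\<xi>,\<eta>). \<xi>) ` supp f2 \<subseteq> {a..b} \<and> b - a \<le> cI * min N1 N2) \<and>
      (\<forall>(\<tau>,\<xi>,\<eta>) \<in> supp f1. \<bar>\<tau> - omega_alpha \<alpha> \<xi> (real_of_int \<eta>)\<bar> \<le> cL * L1) \<and>
      (\<forall>(\<tau>,\<xi>,\<eta>) \<in> supp f2. \<bar>\<tau> - omega_alpha \<alpha> \<xi> (real_of_int \<eta>)\<bar> \<le> cL * L2) \<and>
      (\<forall>\<xi> (\<eta>::int) \<xi>1 (\<eta>1::int).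
          (\<xi>1, \<eta>1) \<in> (\<lambda>(\<tau>,\<xi>,\<eta>). (\<xi>,\<eta>)) ` supp f1 \<and>
          (\<xi> - \<xi>1, \<eta> - \<eta>1) \<in> (\<lambda>(\<tau>,\<xi>,\<eta>). (\<xi>,\<eta>)) ` supp f2 \<longrightarrow>
          \<bar>d_eta_omega \<xi>1 (real_of_int \<eta>1) - d_eta_omega (\<xi> - \<xi>1) (real_of_int (\<eta> - \<eta>1))\<bar>
             \<ge> cT * max N1 N2 powr (\<alpha>/2))
      \<longrightarrow> L2sq M_RT (conv M_RT f1 f2)
          \<le> ennreal (C\<^sup>2 * min N1 N2 * min L1 L2 * (C1_RT \<alpha> (max L1 L2) (max N1 N2))\<^sup>2)
             * L2sq M_RT f1 * L2sq M_RT f2)"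
  apply (intro conjI)
   apply (rule exI[where x="sqrt (32*cL\<^sup>2*cI/cT)"])
   apply (intro conjI allI impI)
    apply (rule real_sqrt_gt_zero[OF nn_consts(3)[OF assms(2) assms(3) assms(4)]])
   apply (elim conjE)
   apply (simp only: real_sqrt_pow2[OF nn_consts(1)[OF assms(2) assms(3) assms(4)]])
   apply (rule caseR[OF assms(2) assms(3) assms(4)]; assumption)
  apply (rule exI[where x="sqrt (8*cL*cI*(8*cL/cT+1))"])
  apply (intro conjI allI impI)
   apply (rule real_sqrt_gt_zero[OF nn_consts(4)[OF assms(2) assms(3) assms(4)]])
  apply (elim conjE)
  apply (simp only: real_sqrt_pow2[OF nn_consts(2)[OF assms(2) assms(3) assms(4)]])
  apply (rule caseZ[OF assms(2) assms(3) assms(4)]; assumption)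
  done

end
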